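(* Let $r,s,t,\ell,m$ be integers with $1 \le t \le \ell \le m$, $1 \le r \le \ell$ and $1 \le s \le t$. Then $$|\mathfrak{D}_{t}(\ell,m;r,s)|=\frac{[m]_q!}{[m-t]_q!}\,q^{s(\ell-r)}\,q^{\binom{s}{2}}\,q^{\binom{t-s}{2}}\,{r\brack s}_q {\ell-r\brack t-s}_q.$$
   Context: $q$ is a prime power. For an $\ell\times m$ matrix $M$ over $\mathbb{F}_q$ and $1\le r\le\ell$, $\underline{M}_r$ denotes the $r\times m$ matrix formed by the first $r$ rows of $M$. $\mathfrak{D}_{t}(\ell,m;r,s)$ is the set of $\ell\times m$ matrices $M$ over $\mathbb{F}_q$ with $\mathrm{rk}(M)=t$ and $\mathrm{rk}(\underline{M}_r)=s$. The Gaussian factorial is $[n]_q!=\prod_{i=1}^n(q^i-1)$ (with $[0]_q!=1$), and ${n\brack k}_q$ denotes the Gaussian binomial coefficient (number of $k$-dimensional subspaces of $\mathbb{F}_q^n$), which is $0$ if $k<0$ or $k>n$. *)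

theory Defs
  imports "Jordan_Normal_Form.DL_Rank"
begin

definition mrank :: "'a::field mat \<Rightarrow> nat" where
  "mrank A = vec_space.rank (dim_row A) A"

definition first_rows :: "nat \<Rightarrow> 'a mat \<Rightarrow> 'a mat" where
  "first_rows r M = mat r (dim_col M) (\<lambda>(i,j). M $$ (i,j))"

definition Dset :: "nat \<Rightarrow> nat \<Rightarrow> nat \<Rightarrow> nat \<Rightarrow> nat \<Rightarrow> 'a::{finite,field} mat set" where
  "Dset t l m r s = {M \<in> carrier_mat l m. mrank M = t \<and> mrank (first_rows r M) = s}"

definition qfact :: "nat \<Rightarrow> nat \<Rightarrow> real" where
  "qfact q n = (\<Prod>i=1..n. (real q ^ i - 1))"

definition qbinom :: "nat \<Rightarrow> nat \<Rightarrow> nat \<Rightarrow> real" where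
  "qbinom q n k = (if k \<le> n then qfact q n / (qfact q k * qfact q (n - k)) else 0)"

end

theory Submission
  imports Defs
begin


context vec_space begin

lemma span_bij:
  assumes fin: "finite B" and BC: "B \<subseteq> carrier_vec n" and li: "lin_indpt B"
  shows "bij_betw (\<lambda>a. lincomb a B) (B \<rightarrow>\<^sub>E (UNIV::'a set)) (span B)"
proof (rule bij_betwI')
  fix a b assume a: "a \<in> B \<rightarrow>\<^sub>E (UNIV::'a set)" and b: "b \<in> B \<rightarrow>\<^sub>E (UNIV::'a set)"
  show "(lincomb a B = lincomb b B) = (a = b)"
  proof
    assume eq: "lincomb a B = lincomb b B"
    have "lincomb (\<lambda>v. a v - b v) B = lincomb a B \<ominus>\<^bsub>V\<^esub> lincomb b B"
      by (rule lincomb_diff[OF fin BC])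
    also have "\<dots> = \<zero>\<^bsub>V\<^esub>" unfolding eq
    proof -
      have c: "lincomb b B \<in> carrier V" using lincomb_closed[OF BC] by auto
      show "lincomb b B \<ominus>\<^bsub>V\<^esub> lincomb b B = \<zero>\<^bsub>V\<^esub>" using c by (simp add: M.minus_eq M.r_neg)
    qed
    finally have z: "lincomb (\<lambda>v. a v - b v) B = 0\<^sub>v n" by simp
    have "\<forall>v\<in>B. a v = b v"
    proof (rule ccontr)
      assume "\<not> (\<forall>v\<in>B. a v = b v)"
      then obtain v where v: "v \<in> B" "a v \<noteq> b v" by auto
      have "lin_dep B"
        by (rule lin_dep_crit[OF fin subset_refl _ v(1) _ z]) (use v in auto)
      with li show False by simp
    qed
    then show "a = b" using a b by (auto intro: PiE_ext)
  qed simp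
next
  fix a assume "a \<in> B \<rightarrow>\<^sub>E (UNIV::'a set)"
  then show "lincomb a B \<in> span B" using fin by (auto simp: finite_span[OF fin BC])
next
  fix v assume "v \<in> span B"
  then obtain a where a: "lincomb a B = v"
    using finite_in_span[OF fin BC] by blast
  show "\<exists>a\<in>B \<rightarrow>\<^sub>E UNIV. v = lincomb a B"
    by (rule bexI[of _ "restrict a B"]) (use a BC in \<open>auto intro: lincomb_cong\<close>)
qed

lemma basis_of_span:
  assumes fin: "finite S" and SC: "S \<subseteq> carrier_vec n"
  shows "\<exists>B. finite B \<and> B \<subseteq> carrier_vec n \<and> lin_indpt B \<and> span B = span S
     \<and> vectorspace.dim class_ring (span_vs S) = card B"
proof -
  have vs: "vectorspace class_ring (span_vs S)"
    using fin SC span_is_subspace subspace_def subspace_is_vs by simp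
  have fd: "vectorspace.fin_dim class_ring (span_vs S)"
    using fin_dim_span[OF fin] SC by simp
  obtain B where B: "finite B" "vectorspace.basis class_ring (span_vs S) B"
    using vectorspace.finite_basis_exists[OF vs fd] by blast
  have sub: "submodule class_ring (span S) V" using SC span_is_submodule by simp
  have BS: "B \<subseteq> span S" using B(2) unfolding vectorspace.basis_def[OF vs] by simp
  have spS: "span S \<subseteq> carrier_vec n" using SC span_is_subset2 by auto
  have li: "lin_indpt B"
    using B(2) unfolding vectorspace.basis_def[OF vs] span_li_not_depend(2)[OF BS sub] by simp
  have sp: "span B = span S"
    using B(2) unfolding vectorspace.basis_def[OF vs] span_li_not_depend(1)[OF BS sub] by simp
  have d: "vectorspace.dim class_ring (span_vs S) = card B"
    using vectorspace.dim_basis[OF vs B] .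
  show ?thesis using B(1) BS spS li sp d by blast
qed

lemma colsp_card_aux:
  assumes A: "A \<in> carrier_mat n k"
  shows "\<exists>B::'a vec set. finite B \<and> card {A *\<^sub>v x |x. x \<in> carrier_vec k} = card (B \<rightarrow>\<^sub>E (UNIV::'a set)) \<and> rank A = card B"
proof -
  have SC: "set (cols A) \<subseteq> carrier_vec n" using A cols_dim by blast
  obtain B where B: "finite B" "B \<subseteq> carrier_vec n" "lin_indpt B" "span B = span (set (cols A))"
     "vectorspace.dim class_ring (span_vs (set (cols A))) = card B"
    using basis_of_span[OF _ SC] by blast
  have "{A *\<^sub>v x |x. x \<in> carrier_vec k} = col_space A"
    unfolding col_space_eq[OF A] using A by auto
  also have "\<dots> = span B" unfolding col_space_def B(4) ..
  finally have e: "{A *\<^sub>v x |x. x \<in> carrier_vec k} = span B" .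
  have c: "card (B \<rightarrow>\<^sub>E (UNIV::'a set)) = card (span B)"
    by (rule bij_betw_same_card[OF span_bij[OF B(1-3)]])
  show ?thesis unfolding rank_def apply (rule exI[where x=B]) using B(1,5) e c by auto
qed

end

definition colsp :: "'a::field mat \<Rightarrow> 'a vec set" where
  "colsp A = {A *\<^sub>v x |x. x \<in> carrier_vec (dim_col A)}"

lemma card_colsp:
  fixes A :: "'a::{finite,field} mat"
  shows "card (colsp A) = card (UNIV::'a set) ^ mrank A"
proof -
  interpret vec_space "TYPE('a)" "dim_row A" .
  have A: "A \<in> carrier_mat (dim_row A) (dim_col A)" by auto
  obtain B :: "'a vec set" where B: "finite B" "card (colsp A) = card (B \<rightarrow>\<^sub>E (UNIV::'a set))" "rank A = card B"
    using colsp_card_aux[OF A] unfolding colsp_def by blast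
  show ?thesis unfolding B(2) mrank_def B(3) using card_PiE[OF \<open>finite B\<close>, of "\<lambda>_. UNIV::'a set"]
    by (simp add: prod_constant)
qed


definition ext :: "'a::field mat \<Rightarrow> 'a vec \<Rightarrow> 'a mat" where
  "ext A v = mat (dim_row A) (Suc (dim_col A)) (\<lambda>(i,k). if k < dim_col A then A $$ (i,k) else v $ i)"

definition proj :: "nat \<Rightarrow> 'a vec \<Rightarrow> 'a vec" where
  "proj r v = vec r (\<lambda>i. v $ i)"

lemma ext_carrier[simp]: "ext A v \<in> carrier_mat (dim_row A) (Suc (dim_col A))"
  by (simp add: ext_def)

lemma ext_mult:
  fixes A :: "'a::field mat"
  assumes A: "A \<in> carrier_mat n k" and v: "v \<in> carrier_vec n" and x: "x \<in> carrier_vec (Suc k)"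
  shows "ext A v *\<^sub>v x = A *\<^sub>v vec k (\<lambda>i. x$i) + x$k \<cdot>\<^sub>v v"
proof (rule eq_vecI)
  show "dim_vec (ext A v *\<^sub>v x) = dim_vec (A *\<^sub>v vec k (\<lambda>i. x$i) + x$k \<cdot>\<^sub>v v)"
    using A v by (simp add: ext_def)
  fix i assume i: "i < dim_vec (A *\<^sub>v vec k (\<lambda>i. x$i) + x$k \<cdot>\<^sub>v v)"
  then have i': "i < n" using v by simp
  have "(ext A v *\<^sub>v x) $ i = (\<Sum>j\<in>{0..<Suc k}. ext A v $$ (i,j) * x $ j)"
    using A x i' by (simp add: ext_def scalar_prod_def)
  also have "\<dots> = (\<Sum>j\<in>{0..<k}. A $$ (i,j) * x $ j) + v $ i * x $ k"
    using A i' by (simp add: ext_def)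
  also have "\<dots> = (A *\<^sub>v vec k (\<lambda>i. x$i) + x$k \<cdot>\<^sub>v v) $ i"
    using A v i' by (simp add: scalar_prod_def mult.commute)
  finally show "(ext A v *\<^sub>v x) $ i = (A *\<^sub>v vec k (\<lambda>i. x$i) + x$k \<cdot>\<^sub>v v) $ i" .
qed

lemma colsp_ext:
  fixes A :: "'a::field mat"
  assumes A: "A \<in> carrier_mat n k" and v: "v \<in> carrier_vec n"
  shows "colsp (ext A v) = {y + c \<cdot>\<^sub>v v | y c. y \<in> colsp A}"
proof -
  have "colsp (ext A v) = {ext A v *\<^sub>v x |x. x \<in> carrier_vec (Suc k)}"
    using A by (simp add: colsp_def ext_def)
  also have "\<dots> = {y + c \<cdot>\<^sub>v v | y c. y \<in> colsp A}"
  proof safe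
    fix x :: "'a vec" assume x: "x \<in> carrier_vec (Suc k)"
    show "\<exists>y c. ext A v *\<^sub>v x = y + c \<cdot>\<^sub>v v \<and> y \<in> colsp A"
      using A by (intro exI[of _ "A *\<^sub>v vec k (\<lambda>i. x$i)"] exI[of _ "x$k"])
        (auto simp: ext_mult[OF A v x] colsp_def)
  next
    fix y c assume "y \<in> colsp A"
    then obtain x where x: "x \<in> carrier_vec k" "y = A *\<^sub>v x" using A by (auto simp: colsp_def)
    define x' where "x' = vec (Suc k) (\<lambda>i. if i < k then x $ i else c)"
    have x': "x' \<in> carrier_vec (Suc k)" by (simp add: x'_def)
    have e2: "vec k (\<lambda>i. x'$i) = x" using x by (auto simp: x'_def)
    have e1: "x'$k = c" by (simp add: x'_def)
    have "ext A v *\<^sub>v x' = y + c \<cdot>\<^sub>v v" unfolding ext_mult[OF A v x'] e1 e2 x(2) ..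
    then show "\<exists>x'. y + c \<cdot>\<^sub>v v = ext A v *\<^sub>v x' \<and> x' \<in> carrier_vec (Suc k)"
      using x' by metis
  qed
  finally show ?thesis .
qed



lemma first_rows_ext:
  fixes A :: "'a::field mat"
  assumes r: "r \<le> dim_row A"
  shows "first_rows r (ext A v) = ext (first_rows r A) (proj r v)"
  using r by (auto simp: first_rows_def ext_def proj_def intro!: eq_matI)

lemma first_rows_mult:
  fixes A :: "'a::field mat"
  assumes r: "r \<le> dim_row A" and x: "x \<in> carrier_vec (dim_col A)"
  shows "first_rows r A *\<^sub>v x = proj r (A *\<^sub>v x)"
  using r x by (auto simp: first_rows_def proj_def scalar_prod_def intro!: eq_vecI)

lemma colsp_first_rows:
  fixes A :: "'a::field mat"
  assumes r: "r \<le> dim_row A"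
  shows "colsp (first_rows r A) = proj r ` colsp A"
proof -
  have "colsp (first_rows r A) = (\<lambda>x. first_rows r A *\<^sub>v x) ` carrier_vec (dim_col A)"
    by (auto simp: colsp_def first_rows_def)
  also have "\<dots> = (\<lambda>x. proj r (A *\<^sub>v x)) ` carrier_vec (dim_col A)"
    using first_rows_mult[OF r] by (intro image_cong) auto
  also have "\<dots> = proj r ` colsp A" by (auto simp: colsp_def)
  finally show ?thesis .
qed

lemma colsp_carrier: "colsp A \<subseteq> carrier_vec (dim_row A)"
  by (auto simp: colsp_def intro!: carrier_vecI)

lemma colsp_add: "y \<in> colsp A \<Longrightarrow> z \<in> colsp A \<Longrightarrow> y + z \<in> colsp A"
proof -
  assume "y \<in> colsp A" "z \<in> colsp A"
  then obtain x x' where x: "x \<in> carrier_vec (dim_col A)" "y = A *\<^sub>v x"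
    and x': "x' \<in> carrier_vec (dim_col A)" "z = A *\<^sub>v x'" by (auto simp: colsp_def)
  have A: "A \<in> carrier_mat (dim_row A) (dim_col A)" by simp
  have "y + z = A *\<^sub>v (x + x')" using mult_add_distrib_mat_vec[OF A x(1) x'(1)] x x' by simp
  moreover have "x + x' \<in> carrier_vec (dim_col A)" using x x' by simp
  ultimately show ?thesis unfolding colsp_def by blast
qed

lemma colsp_smult: "y \<in> colsp A \<Longrightarrow> c \<cdot>\<^sub>v y \<in> colsp A"
proof -
  assume "y \<in> colsp A"
  then obtain x where x: "x \<in> carrier_vec (dim_col A)" "y = A *\<^sub>v x" by (auto simp: colsp_def)
  have A: "A \<in> carrier_mat (dim_row A) (dim_col A)" by simp
  have "c \<cdot>\<^sub>v y = A *\<^sub>v (c \<cdot>\<^sub>v x)" using mult_mat_vec[OF A x(1)] x by simp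
  moreover have "c \<cdot>\<^sub>v x \<in> carrier_vec (dim_col A)" using x by simp
  ultimately show ?thesis unfolding colsp_def by blast
qed

lemma bij_carrier_vec:
  "bij_betw (\<lambda>v. restrict (($) v) {0..<n}) (carrier_vec n) ({0..<n} \<rightarrow>\<^sub>E (UNIV::'a set))"
  by (rule bij_betw_byWitness[where f'="\<lambda>f. vec n f"]) (auto intro!: eq_vecI simp: PiE_def extensional_def fun_eq_iff)

lemma finite_carrier_vec[simp]: "finite (carrier_vec n :: 'a::finite vec set)"
proof -
  have b: "bij_betw (\<lambda>v. restrict (($) v) {0..<n}) (carrier_vec n :: 'a vec set) ({0..<n} \<rightarrow>\<^sub>E (UNIV::'a set))"
    by (rule bij_carrier_vec)
  show ?thesis using bij_betw_finite[OF b] finite_PiE[of "{0..<n}" "\<lambda>_. UNIV::'a set"] by simp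
qed

lemma card_carrier_vec: "card (carrier_vec n :: 'a::finite vec set) = card (UNIV::'a set) ^ n"
proof -
  have b: "bij_betw (\<lambda>v. restrict (($) v) {0..<n}) (carrier_vec n :: 'a vec set) ({0..<n} \<rightarrow>\<^sub>E (UNIV::'a set))"
    by (rule bij_carrier_vec)
  show ?thesis using bij_betw_same_card[OF b] by (simp add: card_PiE)
qed

lemma card_proj_in:
  fixes P :: "'a::finite vec set"
  assumes P: "P \<subseteq> carrier_vec r" and rl: "r \<le> l"
  shows "card {v \<in> carrier_vec l. proj r v \<in> P} = card P * card (UNIV::'a set) ^ (l - r)"
proof -
  have "bij_betw (\<lambda>v. (proj r v, vec (l-r) (\<lambda>i. v$(r+i)))) {v \<in> carrier_vec l. proj r v \<in> P}
     (P \<times> carrier_vec (l-r))"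
  proof (rule bij_betw_byWitness[where f'="\<lambda>(a::'a vec,b::'a vec). vec l (\<lambda>i. if i<r then a$i else b$(i-r))"])
    show "\<forall>a\<in>{v \<in> carrier_vec l. proj r v \<in> P}.
       (\<lambda>(a::'a vec, b::'a vec). vec l (\<lambda>i. if i < r then a $ i else b $ (i - r))) (proj r a, vec (l - r) (\<lambda>i. a $ (r + i))) = a"
    proof
      fix v :: "'a vec" assume "v \<in> {v \<in> carrier_vec l. proj r v \<in> P}"
      then have v: "v \<in> carrier_vec l" by simp
      show "(\<lambda>(a::'a vec, b::'a vec). vec l (\<lambda>i. if i < r then a $ i else b $ (i - r))) (proj r v, vec (l - r) (\<lambda>i. v $ (r + i))) = v"
        unfolding case_prod_conv by (rule eq_vecI) (use v rl in \<open>auto simp: proj_def\<close>)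
    qed
    show "\<forall>a'\<in>P \<times> carrier_vec (l - r).
       (proj r ((\<lambda>(a::'a vec, b::'a vec). vec l (\<lambda>i. if i < r then a $ i else b $ (i - r))) a'),
        vec (l - r) (\<lambda>i. (\<lambda>(a::'a vec, b::'a vec). vec l (\<lambda>i. if i < r then a $ i else b $ (i - r))) a' $ (r + i))) = a'"
    proof
      fix p :: "'a vec \<times> 'a vec" assume "p \<in> P \<times> carrier_vec (l - r)"
      then obtain a b where p: "p = (a,b)" "a \<in> P" "b \<in> carrier_vec (l - r)" by blast
      have a: "a \<in> carrier_vec r" using p P by auto
      have 1: "proj r (vec l (\<lambda>i. if i < r then a $ i else b $ (i - r))) = a"
        by (rule eq_vecI) (use a rl in \<open>auto simp: proj_def\<close>)
      have 2: "vec (l - r) (\<lambda>i. vec l (\<lambda>i. if i < r then a $ i else b $ (i - r)) $ (r + i)) = b"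
        by (rule eq_vecI) (use p(3) rl in auto)
      show "(proj r ((\<lambda>(a::'a vec, b::'a vec). vec l (\<lambda>i. if i < r then a $ i else b $ (i - r))) p),
        vec (l - r) (\<lambda>i. (\<lambda>(a::'a vec, b::'a vec). vec l (\<lambda>i. if i < r then a $ i else b $ (i - r))) p $ (r + i))) = p"
        unfolding p(1) case_prod_conv 1 2 ..
    qed
    show "(\<lambda>v. (proj r v, vec (l - r) (\<lambda>i. v $ (r + i)))) ` {v \<in> carrier_vec l. proj r v \<in> P}
      \<subseteq> P \<times> carrier_vec (l - r)" by auto
    show "(\<lambda>(a::'a vec, b::'a vec). vec l (\<lambda>i. if i < r then a $ i else b $ (i - r))) ` (P \<times> carrier_vec (l - r))
      \<subseteq> {v \<in> carrier_vec l. proj r v \<in> P}"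
    proof
      fix w assume "w \<in> (\<lambda>(a::'a vec, b::'a vec). vec l (\<lambda>i. if i < r then a $ i else b $ (i - r))) ` (P \<times> carrier_vec (l - r))"
      then obtain a b :: "'a vec" where w: "w = vec l (\<lambda>i. if i < r then a $ i else b $ (i - r))" "a \<in> P" by auto
      have a: "a \<in> carrier_vec r" using w P by auto
      have "proj r w = a"
        unfolding w(1) by (rule eq_vecI) (use a rl in \<open>auto simp: proj_def\<close>)
      then show "w \<in> {v \<in> carrier_vec l. proj r v \<in> P}" using w by simp
    qed
  qed
  from bij_betw_same_card[OF this] show ?thesis
    by (simp add: card_cartesian_product card_carrier_vec)
qed

lemma card_ext_set:
  fixes C :: "'a::{finite,field} vec set"
  assumes CC: "C \<subseteq> carrier_vec n" and add: "\<And>x y. x \<in> C \<Longrightarrow> y \<in> C \<Longrightarrow> x + y \<in> C"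
    and sm: "\<And>c x. x \<in> C \<Longrightarrow> c \<cdot>\<^sub>v x \<in> C" and v: "v \<in> carrier_vec n"
  shows "card {y + c \<cdot>\<^sub>v v | y c. y \<in> C} = (if v \<in> C then card C else card (UNIV::'a set) * card C)"
proof (cases "v \<in> C")
  case True
  have "{y + c \<cdot>\<^sub>v v | y c. y \<in> C} = C"
  proof safe
    fix y c assume "y \<in> C" then show "y + c \<cdot>\<^sub>v v \<in> C" using True add sm by blast
  next
    fix y assume y: "y \<in> C"
    then have "y = y + 0 \<cdot>\<^sub>v v" using CC v by (intro eq_vecI) auto
    then show "\<exists>y' c. y = y' + c \<cdot>\<^sub>v v \<and> y' \<in> C" using y by blast
  qed
  then show ?thesis using True by simp
next
  case False
  have eq: "{y + c \<cdot>\<^sub>v v | y c. y \<in> C} = (\<lambda>(y,c). y + c \<cdot>\<^sub>v v) ` (C \<times> UNIV)" by auto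
  have inj: "inj_on (\<lambda>(y,c). y + c \<cdot>\<^sub>v v) (C \<times> UNIV)"
  proof (rule inj_onI, clarify)
    fix y c y' c' assume y: "y \<in> C" and y': "y' \<in> C" and e: "y + c \<cdot>\<^sub>v v = y' + c' \<cdot>\<^sub>v v"
    have yc: "y \<in> carrier_vec n" "y' \<in> carrier_vec n" using y y' CC by auto
    have ci: "y $ i + c * v $ i = y' $ i + c' * v $ i" if "i < n" for i
      using arg_cong[OF e, of "\<lambda>w. w $ i"] that yc v by simp
    show "y = y' \<and> c = c'"
    proof (cases "c = c'")
      case True
      then show ?thesis using ci yc by (auto intro!: eq_vecI)
    next
      case ne: False
      have "v = (1 / (c - c')) \<cdot>\<^sub>v (y' + (-1) \<cdot>\<^sub>v y)"
      proof (rule eq_vecI)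
        fix i assume "i < dim_vec ((1 / (c - c')) \<cdot>\<^sub>v (y' + (-1) \<cdot>\<^sub>v y))"
        then have i: "i < n" using yc by simp
        have "(c - c') * v $ i = y' $ i - y $ i" using ci[OF i] by (simp add: algebra_simps)
        then show "v $ i = ((1 / (c - c')) \<cdot>\<^sub>v (y' + (-1) \<cdot>\<^sub>v y)) $ i"
          using i yc ne by (simp add: field_simps)
      qed (use yc v in simp)
      moreover have "(1 / (c - c')) \<cdot>\<^sub>v (y' + (-1) \<cdot>\<^sub>v y) \<in> C" using y y' add sm by blast
      ultimately show ?thesis using False by simp
    qed
  qed
  have "finite C" using CC by (rule finite_subset) simp
  then show ?thesis unfolding eq card_image[OF inj] using False
    by (simp add: card_cartesian_product)
qed


lemma card_field_gt1: "1 < card (UNIV :: 'a::{finite,field} set)"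
proof -
  have "card {0, 1::'a} \<le> card (UNIV :: 'a set)" by (rule card_mono) auto
  then show ?thesis by simp
qed

lemma mrank_ext:
  fixes A :: "'a::{finite,field} mat"
  assumes A: "A \<in> carrier_mat l j" and v: "v \<in> carrier_vec l"
  shows "mrank (ext A v) = (if v \<in> colsp A then mrank A else Suc (mrank A))"
proof -
  let ?q = "card (UNIV :: 'a set)"
  have CC: "colsp A \<subseteq> carrier_vec l" using colsp_carrier[of A] A by simp
  have "?q ^ mrank (ext A v) = card (colsp (ext A v))" by (simp add: card_colsp)
  also have "\<dots> = (if v \<in> colsp A then card (colsp A) else ?q * card (colsp A))"
    unfolding colsp_ext[OF A v]
    by (rule card_ext_set[OF CC colsp_add colsp_smult v])
  also have "\<dots> = ?q ^ (if v \<in> colsp A then mrank A else Suc (mrank A))"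
    by (simp add: card_colsp)
  finally show ?thesis using card_field_gt1[where 'a='a] by (simp only: power_inject_exp)
qed

lemma mrank_first_rows_ext:
  fixes A :: "'a::{finite,field} mat"
  assumes A: "A \<in> carrier_mat l j" and v: "v \<in> carrier_vec l" and r: "r \<le> l"
  shows "mrank (first_rows r (ext A v)) =
    (if proj r v \<in> colsp (first_rows r A) then mrank (first_rows r A) else Suc (mrank (first_rows r A)))"
proof -
  have "first_rows r (ext A v) = ext (first_rows r A) (proj r v)"
    using A r by (intro first_rows_ext) simp
  moreover have "first_rows r A \<in> carrier_mat r j" using A by (simp add: first_rows_def)
  moreover have "proj r v \<in> carrier_vec r" by (simp add: proj_def)
  ultimately show ?thesis using mrank_ext by metis
qed

lemma bij_ext:
  "bij_betw (\<lambda>(A, v). ext A v) (carrier_mat l j \<times> carrier_vec l) (carrier_mat l (Suc j) :: 'a::field mat set)"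
proof (rule bij_betw_byWitness[where f'="\<lambda>M. (mat l j (\<lambda>ik. M $$ ik), col M j)"])
  have 1: "mat l j (($$) (ext A v)) = A" if "A \<in> carrier_mat l j" "v \<in> carrier_vec l" for A :: "'a mat" and v
    by (rule eq_matI) (use that in \<open>auto simp: ext_def\<close>)
  have 2: "col (ext A v) j = v" if "A \<in> carrier_mat l j" "v \<in> carrier_vec l" for A :: "'a mat" and v
    by (rule eq_vecI) (use that in \<open>auto simp: ext_def\<close>)
  show "\<forall>a\<in>carrier_mat l j \<times> (carrier_vec l :: 'a vec set).
       (\<lambda>M. (mat l j (($$) M), col M j)) ((\<lambda>(A, v). ext A v) a) = a"
    using 1 2 by auto
  show "\<forall>M\<in>(carrier_mat l (Suc j) :: 'a mat set). (\<lambda>(A, v). ext A v) (mat l j (($$) M), col M j) = M"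
  proof
    fix M :: "'a mat" assume M: "M \<in> carrier_mat l (Suc j)"
    show "(\<lambda>(A, v). ext A v) (mat l j (($$) M), col M j) = M"
      unfolding case_prod_conv by (rule eq_matI) (use M in \<open>auto simp: ext_def less_Suc_eq\<close>)
  qed
  show "(\<lambda>(A, v). ext A v) ` (carrier_mat l j \<times> (carrier_vec l :: 'a vec set)) \<subseteq> carrier_mat l (Suc j)"
    using ext_carrier by fastforce
  show "(\<lambda>M. (mat l j (($$) M), col M j)) ` (carrier_mat l (Suc j) :: 'a mat set) \<subseteq> carrier_mat l j \<times> carrier_vec l"
    by auto
qed
lemma finite_carrier_mat[simp]: "finite (carrier_mat l j :: 'a::{finite,field} mat set)"
proof (induction j)
  case 0
  have "carrier_mat l 0 \<subseteq> {mat l 0 (\<lambda>_. 0) :: 'a mat}" by (auto intro!: eq_matI)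
  then show ?case using finite_subset by blast
next
  case (Suc j)
  have "finite ((carrier_mat l j :: 'a mat set) \<times> (carrier_vec l :: 'a vec set))"
    using Suc by auto
  then show ?case using bij_betw_finite[OF bij_ext[where 'a='a and l=l and j=j]] by simp
qed
lemma card_V:
  fixes A :: "'a::{finite,field} mat"
  assumes A: "A \<in> carrier_mat l j" and r: "r \<le> l"
  defines "q \<equiv> real (card (UNIV::'a set))"
  shows "real (card {v \<in> carrier_vec l. mrank (ext A v) = a \<and> mrank (first_rows r (ext A v)) = b}) =
    (if mrank A = a \<and> mrank (first_rows r A) = b then q ^ a else 0)
  + (if Suc (mrank A) = a \<and> mrank (first_rows r A) = b then q ^ b * q ^ (l - r) - q ^ mrank A else 0)
  + (if Suc (mrank A) = a \<and> Suc (mrank (first_rows r A)) = b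
       then q ^ l - q ^ mrank (first_rows r A) * q ^ (l - r) else 0)"
proof -
  define a' where "a' = mrank A"
  define b' where "b' = mrank (first_rows r A)"
  define C where "C = colsp A"
  define P where "P = colsp (first_rows r A)"
  define Q where "Q = {v \<in> carrier_vec l. proj r v \<in> P}"
  define V where "V = {v \<in> carrier_vec l. mrank (ext A v) = a \<and> mrank (first_rows r (ext A v)) = b}"
  have CC: "C \<subseteq> carrier_vec l" using colsp_carrier[of A] A by (simp add: C_def)
  have PC: "P \<subseteq> carrier_vec r" using colsp_carrier[of "first_rows r A"] by (simp add: P_def first_rows_def)
  have CQ: "C \<subseteq> Q" using CC colsp_first_rows[of r A] r A by (auto simp: Q_def C_def P_def)
  have QC: "Q \<subseteq> carrier_vec l" by (auto simp: Q_def)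
  have V: "V = {v \<in> carrier_vec l. (if v \<in> C then a' else Suc a') = a \<and> (if proj r v \<in> P then b' else Suc b') = b}"
    unfolding V_def a'_def b'_def C_def P_def
    using mrank_ext[OF A] mrank_first_rows_ext[OF A _ r] by auto
  have fin: "finite C" "finite Q" "finite (carrier_vec l :: 'a vec set)"
    using finite_subset[OF CC finite_carrier_vec] finite_subset[OF QC finite_carrier_vec] by auto
  have V1: "V \<inter> C = (if a' = a \<and> b' = b then C else {})"
    using CC CQ unfolding V Q_def by auto
  have V2: "V \<inter> (Q - C) = (if Suc a' = a \<and> b' = b then Q - C else {})"
    using QC unfolding V Q_def by auto
  have V3: "V \<inter> (carrier_vec l - Q) = (if Suc a' = a \<and> Suc b' = b then carrier_vec l - Q else {})"
    using CQ unfolding V Q_def by auto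
  have Vu: "V = (V \<inter> C) \<union> (V \<inter> (Q - C)) \<union> (V \<inter> (carrier_vec l - Q))"
    using CC QC unfolding V by auto
  have fV: "finite (V \<inter> C)" "finite (V \<inter> (Q - C))" "finite (V \<inter> (carrier_vec l - Q))"
    using fin by auto
  have d1: "(V \<inter> C) \<inter> (V \<inter> (Q - C)) = {}" by auto
  have d2: "((V \<inter> C) \<union> (V \<inter> (Q - C))) \<inter> (V \<inter> (carrier_vec l - Q)) = {}" using CQ by auto
  have "card V = card ((V \<inter> C) \<union> (V \<inter> (Q - C))) + card (V \<inter> (carrier_vec l - Q))"
    by (subst Vu, rule card_Un_disjoint) (use fV d2 in auto)
  also have "card ((V \<inter> C) \<union> (V \<inter> (Q - C))) = card (V \<inter> C) + card (V \<inter> (Q - C))"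
    by (rule card_Un_disjoint) (use fV d1 in auto)
  finally have "card V = card (V \<inter> C) + card (V \<inter> (Q - C)) + card (V \<inter> (carrier_vec l - Q))" .
  then have cV: "real (card V) = real (card (V \<inter> C)) + real (card (V \<inter> (Q - C))) + real (card (V \<inter> (carrier_vec l - Q)))"
    by simp
  have cC: "card C = card (UNIV::'a set) ^ a'" by (simp add: C_def a'_def card_colsp)
  have cQ: "card Q = card (UNIV::'a set) ^ b' * card (UNIV::'a set) ^ (l - r)"
    unfolding Q_def using card_proj_in[OF PC r] by (simp add: P_def b'_def card_colsp)
  have le1: "card C \<le> card Q" using card_mono[OF fin(2) CQ] .
  have le2: "card Q \<le> card (carrier_vec l :: 'a vec set)" using card_mono[OF fin(3) QC] .
  have rC: "real (card C) = q ^ a'" using cC by (simp add: q_def)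
  have rQ: "real (card Q) = q ^ b' * q ^ (l - r)" using cQ by (simp add: q_def)
  have rQC: "real (card (Q - C)) = q ^ b' * q ^ (l - r) - q ^ a'"
    using card_Diff_subset[OF fin(1) CQ] of_nat_diff[OF le1, where 'a=real] rC rQ by simp
  have rCQ: "real (card (carrier_vec l - Q)) = q ^ l - q ^ b' * q ^ (l - r)"
    using card_Diff_subset[OF fin(2) QC] of_nat_diff[OF le2, where 'a=real] rQ by (simp add: card_carrier_vec q_def)
  have "real (card V) =
    (if a' = a \<and> b' = b then q ^ a' else 0)
  + (if Suc a' = a \<and> b' = b then q ^ b' * q ^ (l - r) - q ^ a' else 0)
  + (if Suc a' = a \<and> Suc b' = b then q ^ l - q ^ b' * q ^ (l - r) else 0)"
    unfolding cV V1 V2 V3 using rC rQC rCQ by simp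
  then show ?thesis unfolding V_def a'_def b'_def by auto
qed

definition Tset :: "nat \<Rightarrow> nat \<Rightarrow> nat \<Rightarrow> nat \<Rightarrow> nat \<Rightarrow> 'a::field mat set" where
  "Tset l r j a b = {A \<in> carrier_mat l j. mrank A = a \<and> mrank (first_rows r A) = b}"

lemma sum_if_const:
  assumes "finite S"
  shows "(\<Sum>x\<in>S. if P x then (c::real) else 0) = c * real (card {x\<in>S. P x})"
proof -
  have "(\<Sum>x\<in>S. if P x then c else 0) = (\<Sum>x\<in>{x\<in>S. P x}. c)"
    using sum.inter_filter[OF assms, of "\<lambda>_. c" P] by simp
  then show ?thesis by simp
qed

lemma Tset_rec:
  fixes l r :: nat
  assumes r: "r \<le> l"
  defines "q \<equiv> real (card (UNIV::'a::{finite,field} set))"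
  shows "real (card (Tset l r (Suc j) a b :: 'a mat set)) =
     q ^ a * card (Tset l r j a b :: 'a mat set)
   + (if a = 0 then 0 else (q ^ b * q ^ (l - r) - q ^ (a - 1)) * card (Tset l r j (a - 1) b :: 'a mat set))
   + (if a = 0 \<or> b = 0 then 0 else (q ^ l - q ^ (b - 1) * q ^ (l - r)) * card (Tset l r j (a - 1) (b - 1) :: 'a mat set))"
proof -
  let ?S = "carrier_mat l j :: 'a mat set"
  let ?f = "\<lambda>(A::'a mat, v::'a vec). ext A v"
  define Vs where "Vs A = {v \<in> carrier_vec l. mrank (ext A v) = a \<and> mrank (first_rows r (ext A v)) = b}" for A :: "'a mat"
  have bij: "bij_betw ?f (?S \<times> carrier_vec l) (carrier_mat l (Suc j))" by (rule bij_ext)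
  have img: "?f ` (?S \<times> carrier_vec l) = carrier_mat l (Suc j)" using bij_betw_imp_surj_on[OF bij] .
  have T1: "Tset l r (Suc j) a b = ?f ` (Sigma ?S Vs)"
  proof
    show "Tset l r (Suc j) a b \<subseteq> ?f ` (Sigma ?S Vs)"
    proof
      fix M :: "'a mat" assume M: "M \<in> Tset l r (Suc j) a b"
      then have "M \<in> ?f ` (?S \<times> carrier_vec l)" using img by (auto simp: Tset_def)
      then obtain A v where Av: "A \<in> ?S" "v \<in> carrier_vec l" "M = ext A v" by auto
      then have "(A, v) \<in> Sigma ?S Vs" using M by (auto simp: Tset_def Vs_def)
      then show "M \<in> ?f ` (Sigma ?S Vs)" using Av by force
    qed
    show "?f ` (Sigma ?S Vs) \<subseteq> Tset l r (Suc j) a b"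
    proof
      fix M assume "M \<in> ?f ` (Sigma ?S Vs)"
      then obtain A v where Av: "A \<in> ?S" "v \<in> Vs A" "M = ext A v" by auto
      have "M \<in> carrier_mat l (Suc j)" using Av(1) Av(3) ext_carrier[of A v] by auto
      then show "M \<in> Tset l r (Suc j) a b" using Av by (auto simp: Tset_def Vs_def)
    qed
  qed
  have inj: "inj_on ?f (Sigma ?S Vs)"
    by (rule inj_on_subset[OF bij_betw_imp_inj_on[OF bij]]) (auto simp: Vs_def)
  have finV: "\<forall>A\<in>?S. finite (Vs A)" unfolding Vs_def by auto
  have "card (Tset l r (Suc j) a b :: 'a mat set) = (\<Sum>A\<in>?S. card (Vs A))"
    unfolding T1 card_image[OF inj] using finV by simp
  then have "real (card (Tset l r (Suc j) a b :: 'a mat set)) = (\<Sum>A\<in>?S. real (card (Vs A)))"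
    by simp
  also have "\<dots> = (\<Sum>A\<in>?S.
    (if mrank A = a \<and> mrank (first_rows r A) = b then q ^ a else 0)
  + (if Suc (mrank A) = a \<and> mrank (first_rows r A) = b then q ^ b * q ^ (l - r) - q ^ mrank A else 0)
  + (if Suc (mrank A) = a \<and> Suc (mrank (first_rows r A)) = b
       then q ^ l - q ^ mrank (first_rows r A) * q ^ (l - r) else 0))"
    by (rule sum.cong[OF refl]) (unfold Vs_def q_def, rule card_V[OF _ r], simp)
  also have "\<dots> = (\<Sum>A\<in>?S. (if mrank A = a \<and> mrank (first_rows r A) = b then q ^ a else 0))
  + (\<Sum>A\<in>?S. (if Suc (mrank A) = a \<and> mrank (first_rows r A) = b then q ^ b * q ^ (l - r) - q ^ mrank A else 0))
  + (\<Sum>A\<in>?S. (if Suc (mrank A) = a \<and> Suc (mrank (first_rows r A)) = b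
       then q ^ l - q ^ mrank (first_rows r A) * q ^ (l - r) else 0))"
    by (simp add: sum.distrib)
  also have "(\<Sum>A\<in>?S. (if mrank A = a \<and> mrank (first_rows r A) = b then q ^ a else 0))
     = q ^ a * card (Tset l r j a b :: 'a mat set)"
    by (subst sum_if_const) (auto simp: Tset_def)
  also have "(\<Sum>A\<in>?S. (if Suc (mrank A) = a \<and> mrank (first_rows r A) = b then q ^ b * q ^ (l - r) - q ^ mrank A else 0))
     = (if a = 0 then 0 else (q ^ b * q ^ (l - r) - q ^ (a - 1)) * card (Tset l r j (a - 1) b :: 'a mat set))"
  proof (cases a)
    case 0 then show ?thesis by simp
  next
    case (Suc a0)
    have "(\<Sum>A\<in>?S. (if Suc (mrank A) = a \<and> mrank (first_rows r A) = b then q ^ b * q ^ (l - r) - q ^ mrank A else 0))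
      = (\<Sum>A\<in>?S. (if mrank A = a0 \<and> mrank (first_rows r A) = b then q ^ b * q ^ (l - r) - q ^ a0 else 0))"
      by (rule sum.cong) (auto simp: Suc)
    also have "\<dots> = (q ^ b * q ^ (l - r) - q ^ a0) * card (Tset l r j a0 b :: 'a mat set)"
      by (subst sum_if_const) (auto simp: Tset_def)
    finally show ?thesis using Suc by simp
  qed
  also have "(\<Sum>A\<in>?S. (if Suc (mrank A) = a \<and> Suc (mrank (first_rows r A)) = b
       then q ^ l - q ^ mrank (first_rows r A) * q ^ (l - r) else 0))
     = (if a = 0 \<or> b = 0 then 0 else (q ^ l - q ^ (b - 1) * q ^ (l - r)) * card (Tset l r j (a - 1) (b - 1) :: 'a mat set))"
  proof (cases "a = 0 \<or> b = 0")
    case True then show ?thesis by auto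
  next
    case False
    then obtain a0 b0 where ab: "a = Suc a0" "b = Suc b0" by (metis not0_implies_Suc)
    have "(\<Sum>A\<in>?S. (if Suc (mrank A) = a \<and> Suc (mrank (first_rows r A)) = b
       then q ^ l - q ^ mrank (first_rows r A) * q ^ (l - r) else 0))
      = (\<Sum>A\<in>?S. (if mrank A = a0 \<and> mrank (first_rows r A) = b0 then q ^ l - q ^ b0 * q ^ (l - r) else 0))"
      by (rule sum.cong) (auto simp: ab)
    also have "\<dots> = (q ^ l - q ^ b0 * q ^ (l - r)) * card (Tset l r j a0 b0 :: 'a mat set)"
      by (subst sum_if_const) (auto simp: Tset_def)
    finally show ?thesis using ab by simp
  qed
  finally show ?thesis .
qed




lemma key_id:
  fixes Q u w z R E X Y Br Bn :: real
  assumes Q: "Q > 1" and u: "u \<ge> 1" and w: "w \<ge> 1"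
  assumes R1: "u * (Q * u - 1) * Br = (R - u) * X"
  assumes R2: "w * (Q * w - 1) * Bn = (w * Q * z - w) * Y"
  shows "(u*w*Q) * (Q*u*Q*w - 1) * (E*z) * Br * Bn
       = (Q*u * (w*Q*z) - u*w*Q) * (E*z*u*Q) * Br * Y + (R*(w*Q*z) - u*(w*Q*z)) * E * X * Bn"
proof -
  have "Q * 1 \<le> Q * u" by (rule mult_left_mono) (use Q u in auto)
  then have Qu: "Q * u > 1" using Q by linarith
  have "Q * 1 \<le> Q * w" by (rule mult_left_mono) (use Q w in auto)
  then have Qw: "Q * w > 1" using Q by linarith
  define D1 where "D1 = u * (Q * u - 1)"
  define D2 where "D2 = w * (Q * w - 1)"
  have D: "D1 * D2 \<noteq> 0" using u w Qu Qw by (simp add: D1_def D2_def)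
  have R1': "D1 * Br = (R - u) * X" using R1 by (simp add: D1_def)
  have a1: "w * Q * z - w = w * (Q * z - 1)" by (simp add: algebra_simps)
  have R2': "D2 * Bn = (w * (Q * z - 1)) * Y" using R2 a1 by (simp add: D2_def)
  have a2: "Q*u*(w*Q*z) - u*w*Q = u*w*Q*(Q*z-1)" by (simp add: algebra_simps)
  have a3: "R*(w*Q*z) - u*(w*Q*z) = (R-u)*(w*Q*z)" by (simp add: algebra_simps)
  define F where "F = (R-u)*X*Y*E*z*u*w*w*Q*(Q*z-1)"
  have L: "D1*D2*((u*w*Q)*(Q*u*Q*w-1)*(E*z)*Br*Bn) = F*(Q*u*Q*w-1)"
  proof -
    have "D1*D2*((u*w*Q)*(Q*u*Q*w-1)*(E*z)*Br*Bn) = (u*w*Q)*(Q*u*Q*w-1)*(E*z)*(D1*Br)*(D2*Bn)"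
      by (simp only: mult_ac)
    also have "\<dots> = (u*w*Q)*(Q*u*Q*w-1)*(E*z)*((R - u) * X)*((w * (Q * z - 1)) * Y)"
      unfolding R1' R2' ..
    also have "\<dots> = F*(Q*u*Q*w-1)" unfolding F_def by (simp only: mult_ac)
    finally show ?thesis .
  qed
  have T1: "D1*D2*((Q*u*(w*Q*z) - u*w*Q)*(E*z*u*Q)*Br*Y) = F*(u*Q*(Q*w-1))"
  proof -
    have "D1*D2*((Q*u*(w*Q*z) - u*w*Q)*(E*z*u*Q)*Br*Y) = (u*w*Q*(Q*z-1))*(E*z*u*Q)*(D1*Br)*D2*Y"
      unfolding a2 by (simp only: mult_ac)
    also have "\<dots> = (u*w*Q*(Q*z-1))*(E*z*u*Q)*((R - u) * X)*(w * (Q * w - 1))*Y"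
      unfolding R1' D2_def ..
    also have "\<dots> = F*(u*Q*(Q*w-1))" unfolding F_def by (simp only: mult_ac)
    finally show ?thesis .
  qed
  have T2: "D1*D2*((R*(w*Q*z) - u*(w*Q*z))*E*X*Bn) = F*(Q*u-1)"
  proof -
    have "D1*D2*((R*(w*Q*z) - u*(w*Q*z))*E*X*Bn) = ((R-u)*(w*Q*z))*E*X*D1*(D2*Bn)"
      unfolding a3 by (simp only: mult_ac)
    also have "\<dots> = ((R-u)*(w*Q*z))*E*X*(u * (Q * u - 1))*((w * (Q * z - 1)) * Y)"
      unfolding R2' D1_def ..
    also have "\<dots> = F*(Q*u-1)" unfolding F_def by (simp only: mult_ac)
    finally show ?thesis .
  qed
  have S: "F*(Q*u*Q*w-1) = F*(u*Q*(Q*w-1)) + F*(Q*u-1)" by (simp add: algebra_simps)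
  have "D1*D2*((u*w*Q) * (Q*u*Q*w - 1) * (E*z) * Br * Bn)
     = D1*D2*((Q*u * (w*Q*z) - u*w*Q) * (E*z*u*Q) * Br * Y + (R*(w*Q*z) - u*(w*Q*z)) * E * X * Bn)"
    unfolding distrib_left L T1 T2 S ..
  then show ?thesis using D by simp
qed

lemma qfact_Suc: "qfact q (Suc n) = qfact q n * (real q ^ Suc n - 1)"
  unfolding qfact_def by (simp add: prod.nat_ivl_Suc' mult.commute)

lemma qfact_0[simp]: "qfact q 0 = 1"
  unfolding qfact_def by simp

lemma qfact_pos: assumes "2 \<le> q" shows "qfact q n > 0"
proof (induction n)
  case 0 then show ?case by simp
next
  case (Suc n)
  have "real q ^ Suc n \<ge> real q" using assms
    by (metis One_nat_def Suc_le_eq le_add1 less_1_mult numerals(2) of_nat_1 of_nat_le_iff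
        one_le_numeral order_trans plus_1_eq_Suc power_increasing power_one_right zero_less_Suc)
  then have "real q ^ Suc n - 1 > 0" using assms by linarith
  then show ?case using Suc by (simp add: qfact_Suc)
qed

lemma qbinom_0: "2 \<le> q \<Longrightarrow> qbinom q n 0 = 1"
  using qfact_pos[of q n] by (simp add: qbinom_def)

lemma aux_cancel:
  fixes P A B F K M :: real
  assumes "A \<noteq> 0" "B \<noteq> 0"
  shows "P * A * (F / (K * A * M)) = (P * B) * (F / (K * (M * B)))"
proof -
  have "P * A * (F / (K * A * M)) = P * (F / (K * M))" using assms(1) by simp
  moreover have "(P * B) * (F / (K * (M * B))) = P * (F / (K * M))" using assms(2) by simp
  ultimately show ?thesis by simp
qed

lemma qbinom_gt: "n < k \<Longrightarrow> qbinom q n k = 0"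
  by (simp add: qbinom_def)

lemma qbinom_rec:
  assumes q: "2 \<le> q"
  shows "real q ^ k * (real q ^ Suc k - 1) * qbinom q n (Suc k) = (real q ^ n - real q ^ k) * qbinom q n k"
proof (cases "Suc k \<le> n")
  case True
  define m where "m = n - Suc k"
  have n: "n = k + Suc m" using True by (simp add: m_def)
  let ?Q = "real q"
  have q1: "?Q > 1" using q by simp
  have Q1: "?Q ^ Suc k - 1 \<noteq> 0" using one_less_power[OF q1, of "Suc k"] by simp
  have Q2: "?Q ^ Suc m - 1 \<noteq> 0" using one_less_power[OF q1, of "Suc m"] by simp
  have e1: "qbinom q n (Suc k) = qfact q n / (qfact q k * (?Q ^ Suc k - 1) * qfact q m)"
    using True unfolding qbinom_def qfact_Suc[of q k] by (simp add: n)
  have e2: "qbinom q n k = qfact q n / (qfact q k * (qfact q m * (?Q ^ Suc m - 1)))"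
  proof -
    have "n - k = Suc m" using n by simp
    then show ?thesis unfolding qbinom_def qfact_Suc[of q m, symmetric] using n by simp
  qed
  have e3: "?Q ^ n - ?Q ^ k = ?Q ^ k * (?Q ^ Suc m - 1)"
  proof -
    have "?Q ^ n = ?Q ^ k * ?Q ^ Suc m" unfolding n by (rule power_add)
    then show ?thesis by (simp add: right_diff_distrib)
  qed
  show ?thesis unfolding e1 e2 e3 by (rule aux_cancel[OF Q1 Q2])
next
  case False
  then have "n < Suc k" by simp
  then show ?thesis
  proof (cases "k = n")
    case True then show ?thesis by (simp add: qbinom_gt)
  next
    case False
    then show ?thesis using \<open>n < Suc k\<close> by (simp add: qbinom_gt)
  qed
qed


definition Wf :: "nat \<Rightarrow> nat \<Rightarrow> nat \<Rightarrow> nat \<Rightarrow> nat \<Rightarrow> real" where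
  "Wf q r n a b = (if b \<le> a then real q ^ (b * (n - (a - b))) * qbinom q r b * qbinom q n (a - b) else 0)"

lemma W_rec:
  assumes q: "2 \<le> q"
  shows "real q ^ a0 * (real q ^ Suc a0 - 1) * Wf q r n (Suc a0) b
    = (real q ^ b * real q ^ n - real q ^ a0) * Wf q r n a0 b
    + (if b = 0 then 0 else (real q ^ (r + n) - real q ^ (b - 1) * real q ^ n) * Wf q r n a0 (b - 1))"
proof -
  let ?Q = "real q"
  consider (big) "Suc a0 < b" | (eq) "b = Suc a0" | (zero) "b = 0" | (mid0) "1 \<le> b" "b \<le> a0"
    by linarith
  then show ?thesis
  proof cases
    case big
    then show ?thesis by (auto simp: Wf_def)
  next
    case eq
    have rec: "?Q ^ a0 * (?Q ^ Suc a0 - 1) * qbinom q r (Suc a0) = (?Q ^ r - ?Q ^ a0) * qbinom q r a0"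
      by (rule qbinom_rec[OF q])
    have "?Q ^ a0 * (?Q ^ Suc a0 - 1) * Wf q r n (Suc a0) b
        = ?Q ^ n * ?Q ^ (a0 * n) * (?Q ^ a0 * (?Q ^ Suc a0 - 1) * qbinom q r (Suc a0))"
      using eq by (simp add: Wf_def qbinom_0[OF q] power_add mult_ac)
    also have "\<dots> = ?Q ^ n * ?Q ^ (a0 * n) * ((?Q ^ r - ?Q ^ a0) * qbinom q r a0)"
      unfolding rec ..
    also have "\<dots> = (real q ^ b * real q ^ n - real q ^ a0) * Wf q r n a0 b
    + (if b = 0 then 0 else (real q ^ (r + n) - real q ^ (b - 1) * real q ^ n) * Wf q r n a0 (b - 1))"
      using eq by (simp add: Wf_def qbinom_0[OF q] power_add algebra_simps)
    finally show ?thesis .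
  next
    case zero
    have rec: "?Q ^ a0 * (?Q ^ Suc a0 - 1) * qbinom q n (Suc a0) = (?Q ^ n - ?Q ^ a0) * qbinom q n a0"
      by (rule qbinom_rec[OF q])
    then show ?thesis using zero by (simp add: Wf_def qbinom_0[OF q])
  next
    case mid0
    define b0 where "b0 = b - 1"
    define c0 where "c0 = a0 - b"
    have mid: "b = Suc b0" "a0 = b + c0" using mid0 by (simp_all add: b0_def c0_def)
    show ?thesis
    proof (cases "n < Suc c0")
      case True
      have z1: "Wf q r n (Suc a0) b = 0" using True mid by (simp add: Wf_def qbinom_gt)
      have z2: "Wf q r n a0 b0 = 0" using True mid by (simp add: Wf_def qbinom_gt)
      have z3: "(?Q ^ b * ?Q ^ n - ?Q ^ a0) * Wf q r n a0 b = 0"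
      proof (cases "n = c0")
        case True
        then show ?thesis using mid by (simp add: power_add)
      next
        case False
        then have "n < c0" using \<open>n < Suc c0\<close> by simp
        then show ?thesis using mid by (simp add: Wf_def qbinom_gt)
      qed
      show ?thesis using z1 z2 z3 mid by simp
    next
      case False
      define d where "d = n - Suc c0"
      have n: "n = Suc c0 + d" using False by (simp add: d_def)
      define u where "u = ?Q ^ b0"
      define w where "w = ?Q ^ c0"
      define z where "z = ?Q ^ d"
      define R where "R = ?Q ^ r"
      define E where "E = ?Q ^ (b0 * d)"
      define X where "X = qbinom q r b0"
      define Y where "Y = qbinom q n c0"
      define Br where "Br = qbinom q r b"
      define Bn where "Bn = qbinom q n (Suc c0)"
      have Q1: "?Q > 1" using q by simp
      have u1: "u \<ge> 1" unfolding u_def using Q1 by simp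
      have w1: "w \<ge> 1" unfolding w_def using Q1 by simp
      have Qn: "?Q ^ n = w * ?Q * z" unfolding n w_def z_def by (simp add: power_add)
      have R1: "u * (?Q * u - 1) * Br = (R - u) * X"
        using qbinom_rec[OF q, of b0 r] unfolding u_def Br_def R_def X_def mid by simp
      have r2: "?Q ^ c0 * (?Q ^ Suc c0 - 1) * qbinom q n (Suc c0) = (?Q ^ n - ?Q ^ c0) * qbinom q n c0"
        by (rule qbinom_rec[OF q])
      then have "w * (?Q * w - 1) * Bn = (?Q ^ n - w) * Y" by (simp add: w_def Bn_def Y_def)
      then have R2: "w * (?Q * w - 1) * Bn = (w * ?Q * z - w) * Y" using Qn by simp
      have key: "(u*w*?Q) * (?Q*u*?Q*w - 1) * (E*z) * Br * Bn
         = (?Q*u * (w*?Q*z) - u*w*?Q) * (E*z*u*?Q) * Br * Y + (R*(w*?Q*z) - u*(w*?Q*z)) * E * X * Bn"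
        by (rule key_id[OF Q1 u1 w1 R1 R2])
      have p1: "?Q ^ a0 = u * w * ?Q" unfolding mid u_def w_def by (simp add: power_add)
      have p2: "?Q ^ Suc a0 = ?Q * u * ?Q * w" unfolding mid u_def w_def by (simp add: power_add)
      have p3: "Wf q r n (Suc a0) b = (E * z) * Br * Bn"
      proof -
        have "b * (n - (Suc a0 - b)) = b0 * d + d" using mid n by simp
        then show ?thesis using mid unfolding Wf_def E_def z_def Br_def Bn_def
          by (simp add: power_add)
      qed
      have p4: "Wf q r n a0 b = (E * z * u * ?Q) * Br * Y"
      proof -
        have "b * (n - (a0 - b)) = b0 * d + d + b0 + 1" using mid n by simp
        then show ?thesis using mid unfolding Wf_def E_def z_def Br_def Y_def u_def
          by (simp add: power_add mult_ac)
      qed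
      have p5: "Wf q r n a0 (b - 1) = E * X * Bn"
      proof -
        have "b0 * (n - (a0 - b0)) = b0 * d" using mid n by simp
        moreover have "a0 - b0 = Suc c0" using mid by simp
        ultimately show ?thesis using mid unfolding Wf_def E_def X_def Bn_def
          by (simp add: d_def)
      qed
      have p6: "?Q ^ b * ?Q ^ n = ?Q * u * (w * ?Q * z)" unfolding Qn mid u_def by simp
      have p7: "?Q ^ (r + n) = R * (w * ?Q * z)" unfolding R_def power_add Qn ..
      have p8: "?Q ^ (b - 1) * ?Q ^ n = u * (w * ?Q * z)" unfolding Qn mid u_def by simp
      have bn0: "b \<noteq> 0" using mid by simp
      show ?thesis unfolding p1 p2 p3 p4 p5 p6 p7 p8 using key bn0 by (simp add: mult.assoc)
    qed
  qed
qed


definition Sq :: "nat \<Rightarrow> nat \<Rightarrow> nat \<Rightarrow> real" where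
  "Sq q j a = (\<Prod>i<a. real q ^ j - real q ^ i)"

lemma Sq_0[simp]: "Sq q j 0 = 1" by (simp add: Sq_def)

lemma Sq_rec: "Sq q (Suc j) (Suc a) = real q ^ Suc a * Sq q j (Suc a) + real q ^ a * (real q ^ Suc a - 1) * Sq q j a"
proof -
  let ?Q = "real q"
  have "Sq q (Suc j) (Suc a) = (?Q ^ Suc j - ?Q ^ 0) * (\<Prod>i<a. ?Q ^ Suc j - ?Q ^ Suc i)"
    unfolding Sq_def by (rule prod.lessThan_Suc_shift)
  also have "(\<Prod>i<a. ?Q ^ Suc j - ?Q ^ Suc i) = (\<Prod>i<a. ?Q * (?Q ^ j - ?Q ^ i))"
    by (simp add: right_diff_distrib)
  also have "\<dots> = ?Q ^ a * Sq q j a"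
    unfolding Sq_def by (simp add: prod.distrib)
  finally have 1: "Sq q (Suc j) (Suc a) = (?Q ^ Suc j - 1) * (?Q ^ a * Sq q j a)" by simp
  have 2: "Sq q j (Suc a) = Sq q j a * (?Q ^ j - ?Q ^ a)" unfolding Sq_def by simp
  show ?thesis unfolding 1 2 by (simp add: algebra_simps)
qed

lemma Sq_zero_base: "Sq q 0 (Suc a) = 0"
  unfolding Sq_def by (rule prod_zero) (simp, rule bexI[of _ 0], auto)

lemma Sq_qfact:
  assumes "t \<le> m"
  shows "Sq q m t * qfact q (m - t) = real q ^ (t choose 2) * qfact q m"
  using assms
proof (induction t)
  case 0 then show ?case by (simp add: numeral_2_eq_2)
next
  case (Suc t)
  let ?Q = "real q"
  have mt: "m - t = Suc (m - Suc t)" using Suc.prems by simp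
  have IH: "Sq q m t * qfact q (m - t) = ?Q ^ (t choose 2) * qfact q m" using Suc by simp
  have f: "qfact q (m - t) = qfact q (m - Suc t) * (?Q ^ (m - t) - 1)"
    unfolding mt qfact_Suc by simp
  have p: "?Q ^ m - ?Q ^ t = ?Q ^ t * (?Q ^ (m - t) - 1)"
  proof -
    have "?Q ^ m = ?Q ^ t * ?Q ^ (m - t)" using Suc.prems by (simp add: power_add[symmetric])
    then show ?thesis by (simp add: right_diff_distrib)
  qed
  have s: "Sq q m (Suc t) = Sq q m t * (?Q ^ m - ?Q ^ t)" unfolding Sq_def by simp
  have c: "Suc t choose 2 = (t choose 2) + t"
    by (simp add: numeral_2_eq_2)
  have "Sq q m (Suc t) * qfact q (m - Suc t) = ?Q ^ t * (Sq q m t * (qfact q (m - Suc t) * (?Q ^ (m - t) - 1)))"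
    unfolding s p by (simp add: mult_ac)
  also have "\<dots> = ?Q ^ t * (?Q ^ (t choose 2) * qfact q m)" unfolding f[symmetric] IH ..
  also have "\<dots> = ?Q ^ (Suc t choose 2) * qfact q m" unfolding c by (simp add: power_add)
  finally show ?case .
qed

lemma choose2_add: "(s + c) choose 2 = (s choose 2) + (c choose 2) + s * c"
proof (induction c)
  case 0 then show ?case by simp
next
  case (Suc c)
  have "(s + Suc c) choose 2 = (s + c) + ((s + c) choose 2)"
    by (simp add: numeral_2_eq_2)
  moreover have "Suc c choose 2 = c + (c choose 2)" by (simp add: numeral_2_eq_2)
  ultimately show ?case using Suc by simp
qed

lemma final_formula:
  assumes q: "2 \<le> q" and st: "s \<le> t" and tm: "t \<le> m"
  shows "Sq q m t * Wf q r n t s = qfact q m / qfact q (m - t) * real q ^ (s * n) * real q ^ (s choose 2)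
      * real q ^ ((t - s) choose 2) * qbinom q r s * qbinom q n (t - s)"
proof (cases "n < t - s")
  case True
  then show ?thesis using st by (simp add: Wf_def qbinom_gt)
next
  case False
  let ?Q = "real q"
  define c where "c = t - s"
  have t: "t = s + c" using st by (simp add: c_def)
  have cn: "c \<le> n" using False by (simp add: c_def)
  have fpos: "qfact q (m - t) > 0" using qfact_pos[OF q] .
  have S: "Sq q m t = ?Q ^ (t choose 2) * qfact q m / qfact q (m - t)"
    using Sq_qfact[OF tm, of q] fpos by (simp add: field_simps)
  have e: "(t choose 2) + s * (n - c) = s * n + (s choose 2) + (c choose 2)"
  proof -
    have "s * (n - c) + s * c = s * n" using cn by (simp add: diff_mult_distrib2)
    then show ?thesis unfolding t choose2_add by simp
  qed
  have "Sq q m t * Wf q r n t s = ?Q ^ ((t choose 2) + s * (n - c)) * qfact q m / qfact q (m - t)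
     * qbinom q r s * qbinom q n c"
    unfolding S using st by (simp add: Wf_def c_def power_add)
  also have "\<dots> = qfact q m / qfact q (m - t) * real q ^ (s * n) * real q ^ (s choose 2)
      * real q ^ (c choose 2) * qbinom q r s * qbinom q n c"
    unfolding e by (simp add: power_add)
  finally show ?thesis unfolding c_def .
qed



lemma carrier_vec_0: "carrier_vec 0 = {vec 0 (\<lambda>_. 0) :: 'a::zero vec}"
  by (auto intro!: eq_vecI)

lemma mrank_zero_cols:
  fixes A :: "'a::{finite,field} mat"
  assumes A: "A \<in> carrier_mat k 0"
  shows "mrank A = 0"
proof -
  have "colsp A = (\<lambda>x. A *\<^sub>v x) ` carrier_vec 0" using A by (auto simp: colsp_def)
  also have "\<dots> = {A *\<^sub>v vec 0 (\<lambda>_. 0)}" by (simp add: carrier_vec_0)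
  finally have "colsp A = {A *\<^sub>v vec 0 (\<lambda>_. 0)}" .
  then have "card (colsp A) = 1" by simp
  then have "card (UNIV::'a set) ^ mrank A = 1" by (simp add: card_colsp)
  then show ?thesis using card_field_gt1[where 'a='a] by simp
qed

lemma Tset_0:
  "real (card (Tset l r 0 a b :: 'a::{finite,field} mat set)) = (if a = 0 \<and> b = 0 then 1 else 0)"
proof -
  define A0 where "A0 = (mat l 0 (\<lambda>_. 0) :: 'a mat)"
  have C: "carrier_mat l 0 = {A0}" unfolding A0_def by (auto intro!: eq_matI)
  have m1: "mrank A0 = 0" by (rule mrank_zero_cols[of _ l]) (simp add: A0_def)
  have m2: "mrank (first_rows r A0) = 0" by (rule mrank_zero_cols[of _ r]) (simp add: A0_def first_rows_def)
  have "Tset l r 0 a b = (if a = 0 \<and> b = 0 then {A0} else {})"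
    unfolding Tset_def C using m1 m2 by auto
  then show ?thesis by simp
qed

lemma aux2:
  fixes x y s w c w' :: real
  shows "x + y * (s * w) + (if P then 0 else c * (s * w')) = x + s * (y * w + (if P then 0 else c * w'))"
  by (cases P) (simp_all add: algebra_simps)

lemma aux3:
  fixes A B S1 S0 W :: real
  shows "(A * S1 + B * S0) * W = A * (S1 * W) + S0 * (B * W)"
  by (simp add: algebra_simps)

lemma Tset_closed:
  fixes l r :: nat
  assumes r: "r \<le> l"
  defines "q \<equiv> card (UNIV::'a::{finite,field} set)"
  shows "real (card (Tset l r j a b :: 'a mat set)) = Sq q j a * Wf q r (l - r) a b"
proof (induction j arbitrary: a b)
  case 0
  have q2: "2 \<le> q" using card_field_gt1[where 'a='a] by (simp add: q_def)
  show ?case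
  proof (cases a)
    case 0 then show ?thesis by (simp add: Tset_0 Wf_def qbinom_0[OF q2])
  next
    case (Suc a0) then show ?thesis by (simp add: Tset_0 Sq_zero_base)
  qed
next
  case (Suc j)
  have q2: "2 \<le> q" using card_field_gt1[where 'a='a] by (simp add: q_def)
  define n where "n = l - r"
  have l: "l = r + n" using r by (simp add: n_def)
  let ?Q = "real q"
  have rec: "real (card (Tset l r (Suc j) a b :: 'a mat set)) =
     ?Q ^ a * card (Tset l r j a b :: 'a mat set)
   + (if a = 0 then 0 else (?Q ^ b * ?Q ^ n - ?Q ^ (a - 1)) * card (Tset l r j (a - 1) b :: 'a mat set))
   + (if a = 0 \<or> b = 0 then 0 else (?Q ^ l - ?Q ^ (b - 1) * ?Q ^ n) * card (Tset l r j (a - 1) (b - 1) :: 'a mat set))"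
    using Tset_rec[OF r, where 'a='a, of j a b] by (simp add: q_def n_def)
  show ?case
  proof (cases a)
    case 0
    then show ?thesis using rec Suc.IH[of 0 b] by simp
  next
    case (Suc a0)
    have W: "?Q ^ a0 * (?Q ^ Suc a0 - 1) * Wf q r n (Suc a0) b
      = (?Q ^ b * ?Q ^ n - ?Q ^ a0) * Wf q r n a0 b
      + (if b = 0 then 0 else (?Q ^ (r + n) - ?Q ^ (b - 1) * ?Q ^ n) * Wf q r n a0 (b - 1))"
      by (rule W_rec[OF q2])
    have ih: "real (card (Tset l r j a' b' :: 'a mat set)) = Sq q j a' * Wf q r n a' b'" for a' b'
      using Suc.IH[of a' b'] by (simp add: n_def)
    have Ql: "?Q ^ l = ?Q ^ (r + n)" using l by simp
    have "real (card (Tset l r (Suc j) a b :: 'a mat set)) =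
       ?Q ^ Suc a0 * real (card (Tset l r j (Suc a0) b :: 'a mat set))
     + (?Q ^ b * ?Q ^ n - ?Q ^ a0) * real (card (Tset l r j a0 b :: 'a mat set))
     + (if b = 0 then 0 else (?Q ^ l - ?Q ^ (b - 1) * ?Q ^ n) * real (card (Tset l r j a0 (b - 1) :: 'a mat set)))"
      using rec \<open>a = Suc a0\<close> by simp
    also have "\<dots> = ?Q ^ Suc a0 * (Sq q j (Suc a0) * Wf q r n (Suc a0) b)
     + (?Q ^ b * ?Q ^ n - ?Q ^ a0) * (Sq q j a0 * Wf q r n a0 b)
     + (if b = 0 then 0 else (?Q ^ (r + n) - ?Q ^ (b - 1) * ?Q ^ n) * (Sq q j a0 * Wf q r n a0 (b - 1)))"
      unfolding ih Ql ..
    also have "\<dots> = ?Q ^ Suc a0 * (Sq q j (Suc a0) * Wf q r n (Suc a0) b)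
     + Sq q j a0 * ((?Q ^ b * ?Q ^ n - ?Q ^ a0) * Wf q r n a0 b
      + (if b = 0 then 0 else (?Q ^ (r + n) - ?Q ^ (b - 1) * ?Q ^ n) * Wf q r n a0 (b - 1)))"
      by (rule aux2)
    also have "\<dots> = ?Q ^ Suc a0 * (Sq q j (Suc a0) * Wf q r n (Suc a0) b)
     + Sq q j a0 * (?Q ^ a0 * (?Q ^ Suc a0 - 1) * Wf q r n (Suc a0) b)"
      unfolding W ..
    also have "\<dots> = Sq q (Suc j) (Suc a0) * Wf q r n (Suc a0) b"
      unfolding Sq_rec by (rule aux3[symmetric])
    finally show ?thesis using \<open>a = Suc a0\<close> by (simp add: n_def)
  qed
qed

theorem mainTheorem13:
  fixes r s t l m :: nat
  assumes "1 \<le> t" "t \<le> l" "l \<le> m" "1 \<le> r" "r \<le> l" "1 \<le> s" "s \<le> t"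
  defines "q \<equiv> card (UNIV :: 'a set)"
  shows "real (card (Dset t l m r s :: 'a::{finite,field} mat set)) =
    qfact q m / qfact q (m - t) * real q ^ (s * (l - r)) * real q ^ (s choose 2)
      * real q ^ ((t - s) choose 2) * qbinom q r s * qbinom q (l - r) (t - s)"
proof -
  have q2: "2 \<le> q" using card_field_gt1[where 'a='a] by (simp add: q_def)
  have "Dset t l m r s = (Tset l r m t s :: 'a mat set)" by (simp add: Dset_def Tset_def)
  then have "real (card (Dset t l m r s :: 'a mat set)) = Sq q m t * Wf q r (l - r) t s"
    using Tset_closed[OF assms(5), where 'a='a, of m t s] by (simp add: q_def)
  also have "\<dots> = qfact q m / qfact q (m - t) * real q ^ (s * (l - r)) * real q ^ (s choose 2)
      * real q ^ ((t - s) choose 2) * qbinom q r s * qbinom q (l - r) (t - s)"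
    by (rule final_formula[OF q2 assms(7)]) (use assms in linarith)
  finally show ?thesis .
qed

end
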